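(* Let $I\subset\mathbb{R}$ be an interval, let $a,b,c,d,f,g,h:I\to\mathbb{R}$ be given functions with $a(t)\neq0$ on $I$, and let $y\in\mathbb{R}$ be a parameter. Suppose $\mu>0,\alpha,\beta,\gamma,\delta,\varepsilon,\kappa_1,\kappa_2$ are differentiable functions on $I$ satisfying the modified Riccati system $$\alpha'+b=2c\alpha+4a\alpha^2,\quad \beta'=(c+4a\alpha)\beta,\quad \gamma'=a\beta^2,\quad \delta'+2\alpha g=(c+4a\alpha)\delta+f,$$ $$\varepsilon'=(2a\delta-g)\beta,\quad \kappa_1'=a\delta^2-g\delta+he^{\kappa_2},\quad \kappa_2'=-he^{\kappa_2},$$ together with $\alpha=-\dfrac{\mu'}{4a\mu}-\dfrac{d}{2a}$. Then $$\psi(x,t)=\frac{1}{\sqrt{\mu(t)}}e^{\alpha x^2+\beta xy+\gamma y^2+\delta x+\varepsilon y+\kappa_1},\qquad \varphi(x,t)=\frac{1}{\sqrt{\mu(t)}}e^{\alpha x^2+\beta xy+\gamma y^2+\delta x+\varepsilon y+\kappa_1+\kappa_2}$$ (with all coefficient functions evaluated at $t$) solve the system $$\psi_t=a(t)\psi_{xx}-(b(t)x^2-d(t)-xf(t))\psi-(g(t)-c(t)x)\psi_x+h(t)\varphi,$$ $$\varphi_t=a(t)\varphi_{xx}-(b(t)x^2-d(t)-xf(t))\varphi-(g(t)-c(t)x)\varphi_x.$$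
   Context: All functions are real-valued; primes denote derivatives with respect to $t$. *)

theory Defs
  imports "HOL-Analysis.Analysis"
begin

end

theory Submission
  imports Defs
begin

theorem theorem2:
  fixes I :: "real set"
    and a b c d f g h :: "real \<Rightarrow> real"
    and y :: real
    and \<mu> \<alpha> \<beta> \<gamma> \<delta> \<epsilon> \<kappa>1 \<kappa>2 :: "real \<Rightarrow> real"
    and \<mu>' \<alpha>' \<beta>' \<gamma>' \<delta>' \<epsilon>' \<kappa>1' \<kappa>2' :: "real \<Rightarrow> real"
    and \<psi> \<phi> :: "real \<Rightarrow> real \<Rightarrow> real"
  assumes I: "is_interval I"
    and a_nz: "\<And>t. t \<in> I \<Longrightarrow> a t \<noteq> 0"
    and mu_pos: "\<And>t. t \<in> I \<Longrightarrow> \<mu> t > 0"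
    and d_mu: "\<And>t. t \<in> I \<Longrightarrow> (\<mu> has_real_derivative \<mu>' t) (at t within I)"
    and d_alpha: "\<And>t. t \<in> I \<Longrightarrow> (\<alpha> has_real_derivative \<alpha>' t) (at t within I)"
    and d_beta: "\<And>t. t \<in> I \<Longrightarrow> (\<beta> has_real_derivative \<beta>' t) (at t within I)"
    and d_gamma: "\<And>t. t \<in> I \<Longrightarrow> (\<gamma> has_real_derivative \<gamma>' t) (at t within I)"
    and d_delta: "\<And>t. t \<in> I \<Longrightarrow> (\<delta> has_real_derivative \<delta>' t) (at t within I)"
    and d_eps: "\<And>t. t \<in> I \<Longrightarrow> (\<epsilon> has_real_derivative \<epsilon>' t) (at t within I)"
    and d_k1: "\<And>t. t \<in> I \<Longrightarrow> (\<kappa>1 has_real_derivative \<kappa>1' t) (at t within I)"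
    and d_k2: "\<And>t. t \<in> I \<Longrightarrow> (\<kappa>2 has_real_derivative \<kappa>2' t) (at t within I)"
    and R1: "\<And>t. t \<in> I \<Longrightarrow> \<alpha>' t + b t = 2 * c t * \<alpha> t + 4 * a t * (\<alpha> t)\<^sup>2"
    and R2: "\<And>t. t \<in> I \<Longrightarrow> \<beta>' t = (c t + 4 * a t * \<alpha> t) * \<beta> t"
    and R3: "\<And>t. t \<in> I \<Longrightarrow> \<gamma>' t = a t * (\<beta> t)\<^sup>2"
    and R4: "\<And>t. t \<in> I \<Longrightarrow> \<delta>' t + 2 * \<alpha> t * g t = (c t + 4 * a t * \<alpha> t) * \<delta> t + f t"
    and R5: "\<And>t. t \<in> I \<Longrightarrow> \<epsilon>' t = (2 * a t * \<delta> t - g t) * \<beta> t"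
    and R6: "\<And>t. t \<in> I \<Longrightarrow> \<kappa>1' t = a t * (\<delta> t)\<^sup>2 - g t * \<delta> t + h t * exp (\<kappa>2 t)"
    and R7: "\<And>t. t \<in> I \<Longrightarrow> \<kappa>2' t = - h t * exp (\<kappa>2 t)"
    and alpha_mu: "\<And>t. t \<in> I \<Longrightarrow> \<alpha> t = - \<mu>' t / (4 * a t * \<mu> t) - d t / (2 * a t)"
    and psi_def: "\<And>x t. \<psi> x t = 1 / sqrt (\<mu> t) *
        exp (\<alpha> t * x\<^sup>2 + \<beta> t * x * y + \<gamma> t * y\<^sup>2 + \<delta> t * x + \<epsilon> t * y + \<kappa>1 t)"
    and phi_def: "\<And>x t. \<phi> x t = 1 / sqrt (\<mu> t) *
        exp (\<alpha> t * x\<^sup>2 + \<beta> t * x * y + \<gamma> t * y\<^sup>2 + \<delta> t * x + \<epsilon> t * y + \<kappa>1 t + \<kappa>2 t)"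
  shows "\<forall>t\<in>I. \<forall>x.
      (\<lambda>s. \<psi> s t) differentiable (at x) \<and>
      (\<lambda>s. deriv (\<lambda>z. \<psi> z t) s) differentiable (at x) \<and>
      (\<lambda>s. \<phi> s t) differentiable (at x) \<and>
      (\<lambda>s. deriv (\<lambda>z. \<phi> z t) s) differentiable (at x) \<and>
      ((\<lambda>s. \<psi> x s) has_real_derivative
         (a t * deriv (\<lambda>s. deriv (\<lambda>z. \<psi> z t) s) x
          - (b t * x\<^sup>2 - d t - x * f t) * \<psi> x t
          - (g t - c t * x) * deriv (\<lambda>z. \<psi> z t) x
          + h t * \<phi> x t)) (at t within I) \<and>
      ((\<lambda>s. \<phi> x s) has_real_derivative
         (a t * deriv (\<lambda>s. deriv (\<lambda>z. \<phi> z t) s) x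
          - (b t * x\<^sup>2 - d t - x * f t) * \<phi> x t
          - (g t - c t * x) * deriv (\<lambda>z. \<phi> z t) x)) (at t within I)"

proof (intro ballI allI)
  fix t x assume tI: "t \<in> I"
  define Ex where "Ex = (\<lambda>s. 2 * \<alpha> t * s + \<beta> t * y + \<delta> t)"
  have gen: "((\<lambda>z. K * exp (\<alpha> t * z\<^sup>2 + \<beta> t * z * y + \<gamma> t * y\<^sup>2 + \<delta> t * z + \<epsilon> t * y + L))
      has_real_derivative (K * exp (\<alpha> t * s\<^sup>2 + \<beta> t * s * y + \<gamma> t * y\<^sup>2 + \<delta> t * s + \<epsilon> t * y + L)) * Ex s) (at s)"
    for K L s
    unfolding Ex_def
    by (rule derivative_eq_intros refl)+ (simp add: algebra_simps)
  have dpsi: "((\<lambda>z. \<psi> z t) has_real_derivative \<psi> s t * Ex s) (at s)" for s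
    unfolding psi_def by (rule gen)
  have dphi: "((\<lambda>z. \<phi> z t) has_real_derivative \<phi> s t * Ex s) (at s)" for s
    unfolding phi_def using gen[of "1 / sqrt (\<mu> t)" "\<kappa>1 t + \<kappa>2 t" s] by (simp add: add.assoc)
  have Dpsi: "deriv (\<lambda>z. \<psi> z t) = (\<lambda>s. \<psi> s t * Ex s)"
    using dpsi DERIV_imp_deriv by blast
  have Dphi: "deriv (\<lambda>z. \<phi> z t) = (\<lambda>s. \<phi> s t * Ex s)"
    using dphi DERIV_imp_deriv by blast
  have dEx: "(Ex has_real_derivative 2 * \<alpha> t) (at s)" for s
    unfolding Ex_def by (auto intro!: derivative_eq_intros)
  have dpsi2: "((\<lambda>s. \<psi> s t * Ex s) has_real_derivative \<psi> s t * ((Ex s)\<^sup>2 + 2 * \<alpha> t)) (at s)" for s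
    using DERIV_mult[OF dpsi dEx] by (simp add: algebra_simps power2_eq_square)
  have dphi2: "((\<lambda>s. \<phi> s t * Ex s) has_real_derivative \<phi> s t * ((Ex s)\<^sup>2 + 2 * \<alpha> t)) (at s)" for s
    using DERIV_mult[OF dphi dEx] by (simp add: algebra_simps power2_eq_square)
  have DDpsi: "deriv (\<lambda>s. deriv (\<lambda>z. \<psi> z t) s) x = \<psi> x t * ((Ex x)\<^sup>2 + 2 * \<alpha> t)"
    unfolding Dpsi using dpsi2 DERIV_imp_deriv by blast
  have DDphi: "deriv (\<lambda>s. deriv (\<lambda>z. \<phi> z t) s) x = \<phi> x t * ((Ex x)\<^sup>2 + 2 * \<alpha> t)"
    unfolding Dphi using dphi2 DERIV_imp_deriv by blast
  have mu: "\<mu> t > 0" using mu_pos tI by blast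
  have an: "a t \<noteq> 0" using a_nz tI by blast
  have sq: "((\<lambda>s. 1 / sqrt (\<mu> s)) has_real_derivative (- \<mu>' t / (2 * \<mu> t)) * (1 / sqrt (\<mu> t))) (at t within I)"
  proof -
    have s1: "((\<lambda>s. sqrt (\<mu> s)) has_real_derivative inverse (sqrt (\<mu> t)) / 2 * \<mu>' t) (at t within I)"
      by (rule DERIV_chain2[OF DERIV_real_sqrt[OF mu] d_mu[OF tI]])
    have s2: "((\<lambda>s. 1 / sqrt (\<mu> s)) has_real_derivative
        (0 * sqrt (\<mu> t) - 1 * (inverse (sqrt (\<mu> t)) / 2 * \<mu>' t)) / (sqrt (\<mu> t) * sqrt (\<mu> t))) (at t within I)"
      by (rule DERIV_divide[OF DERIV_const s1]) (use mu in simp)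
    then have "((\<lambda>s. 1 / sqrt (\<mu> s)) has_real_derivative
        - (inverse (sqrt (\<mu> t)) / 2 * \<mu>' t) / (sqrt (\<mu> t) * sqrt (\<mu> t))) (at t within I)"
      by simp
    moreover have "- (inverse (sqrt (\<mu> t)) / 2 * \<mu>' t) / (sqrt (\<mu> t) * sqrt (\<mu> t))
        = (- \<mu>' t / (2 * \<mu> t)) * (1 / sqrt (\<mu> t))"
      using mu by (simp add: field_simps)
    ultimately show ?thesis by simp
  qed
  define Et where "Et = \<alpha>' t * x\<^sup>2 + \<beta>' t * x * y + \<gamma>' t * y\<^sup>2 + \<delta>' t * x + \<epsilon>' t * y + \<kappa>1' t"
  have mid: "- \<mu>' t / (2 * \<mu> t) = 2 * a t * \<alpha> t + d t"
    using alpha_mu[OF tI] mu an by (simp add: field_simps) 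
  have key: "- \<mu>' t / (2 * \<mu> t) + Et = a t * ((Ex x)\<^sup>2 + 2 * \<alpha> t) - (b t * x\<^sup>2 - d t - x * f t)
      - (g t - c t * x) * Ex x + h t * exp (\<kappa>2 t)"
  proof -
    have e1: "\<alpha>' t = 2 * c t * \<alpha> t + 4 * a t * (\<alpha> t)\<^sup>2 - b t" using R1[OF tI] by linarith
    have e4: "\<delta>' t = (c t + 4 * a t * \<alpha> t) * \<delta> t + f t - 2 * \<alpha> t * g t" using R4[OF tI] by linarith
    show ?thesis unfolding mid Et_def Ex_def e1 e4 R2[OF tI] R3[OF tI] R5[OF tI] R6[OF tI]
      by (simp add: algebra_simps power2_eq_square)
  qed
  have tE: "((\<lambda>s. exp (\<alpha> s * x\<^sup>2 + \<beta> s * x * y + \<gamma> s * y\<^sup>2 + \<delta> s * x + \<epsilon> s * y + \<kappa>1 s))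
     has_real_derivative exp (\<alpha> t * x\<^sup>2 + \<beta> t * x * y + \<gamma> t * y\<^sup>2 + \<delta> t * x + \<epsilon> t * y + \<kappa>1 t) * Et) (at t within I)"
    unfolding Et_def
    by (rule derivative_eq_intros d_alpha[OF tI] d_beta[OF tI] d_gamma[OF tI] d_delta[OF tI]
          d_eps[OF tI] d_k1[OF tI] refl)+ (simp add: algebra_simps)
  have tE2: "((\<lambda>s. exp (\<alpha> s * x\<^sup>2 + \<beta> s * x * y + \<gamma> s * y\<^sup>2 + \<delta> s * x + \<epsilon> s * y + \<kappa>1 s + \<kappa>2 s))
     has_real_derivative exp (\<alpha> t * x\<^sup>2 + \<beta> t * x * y + \<gamma> t * y\<^sup>2 + \<delta> t * x + \<epsilon> t * y + \<kappa>1 t + \<kappa>2 t) * (Et + \<kappa>2' t)) (at t within I)"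
    unfolding Et_def
    by (rule derivative_eq_intros d_alpha[OF tI] d_beta[OF tI] d_gamma[OF tI] d_delta[OF tI]
          d_eps[OF tI] d_k1[OF tI] d_k2[OF tI] refl)+ (simp add: algebra_simps)
  have tpsi: "((\<lambda>s. \<psi> x s) has_real_derivative \<psi> x t * (- \<mu>' t / (2 * \<mu> t) + Et)) (at t within I)"
    unfolding psi_def by (rule DERIV_cong[OF DERIV_mult[OF sq tE]]) (use mu in \<open>simp add: field_simps\<close>)
  have tphi: "((\<lambda>s. \<phi> x s) has_real_derivative \<phi> x t * (- \<mu>' t / (2 * \<mu> t) + Et + \<kappa>2' t)) (at t within I)"
    unfolding phi_def by (rule DERIV_cong[OF DERIV_mult[OF sq tE2]]) (use mu in \<open>simp add: field_simps\<close>)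
  have phipsi: "\<phi> x t = \<psi> x t * exp (\<kappa>2 t)"
    unfolding phi_def psi_def by (simp add: exp_add)
  show "(\<lambda>s. \<psi> s t) differentiable (at x) \<and>
      (\<lambda>s. deriv (\<lambda>z. \<psi> z t) s) differentiable (at x) \<and>
      (\<lambda>s. \<phi> s t) differentiable (at x) \<and>
      (\<lambda>s. deriv (\<lambda>z. \<phi> z t) s) differentiable (at x) \<and>
      ((\<lambda>s. \<psi> x s) has_real_derivative
         (a t * deriv (\<lambda>s. deriv (\<lambda>z. \<psi> z t) s) x
          - (b t * x\<^sup>2 - d t - x * f t) * \<psi> x t
          - (g t - c t * x) * deriv (\<lambda>z. \<psi> z t) x
          + h t * \<phi> x t)) (at t within I) \<and>
      ((\<lambda>s. \<phi> x s) has_real_derivative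
         (a t * deriv (\<lambda>s. deriv (\<lambda>z. \<phi> z t) s) x
          - (b t * x\<^sup>2 - d t - x * f t) * \<phi> x t
          - (g t - c t * x) * deriv (\<lambda>z. \<phi> z t) x)) (at t within I)"
  proof (intro conjI)
    show "(\<lambda>s. \<psi> s t) differentiable (at x)" using dpsi real_differentiable_def by blast
    show "(\<lambda>s. \<phi> s t) differentiable (at x)" using dphi real_differentiable_def by blast
    show "(\<lambda>s. deriv (\<lambda>z. \<psi> z t) s) differentiable (at x)" unfolding Dpsi using dpsi2 real_differentiable_def by blast
    show "(\<lambda>s. deriv (\<lambda>z. \<phi> z t) s) differentiable (at x)" unfolding Dphi using dphi2 real_differentiable_def by blast
    show "((\<lambda>s. \<psi> x s) has_real_derivative
         (a t * deriv (\<lambda>s. deriv (\<lambda>z. \<psi> z t) s) x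
          - (b t * x\<^sup>2 - d t - x * f t) * \<psi> x t
          - (g t - c t * x) * deriv (\<lambda>z. \<psi> z t) x
          + h t * \<phi> x t)) (at t within I)"
      using tpsi unfolding DDpsi unfolding Dpsi phipsi key by (simp add: algebra_simps)
    show "((\<lambda>s. \<phi> x s) has_real_derivative
         (a t * deriv (\<lambda>s. deriv (\<lambda>z. \<phi> z t) s) x
          - (b t * x\<^sup>2 - d t - x * f t) * \<phi> x t
          - (g t - c t * x) * deriv (\<lambda>z. \<phi> z t) x)) (at t within I)"
      using tphi unfolding DDphi unfolding Dphi key R7[OF tI] by (simp add: algebra_simps)
  qed
qed

end
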